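(* Let $\alpha>0$, $\beta\in\mathbb{R}$ with $0\le|\beta|<\alpha$, $\mu\in\mathbb{R}$, $\delta>0$, and set $\gamma=\sqrt{\alpha^2-\beta^2}$. Let $F(x;\alpha,\beta,\mu,\delta)$ denote the cumulative distribution function of the normal inverse Gaussian distribution with these parameters. Then for every $x\in\mathbb{R}$ with $x-\mu<0$, \[ F(x;\alpha,\beta,\mu,\delta)=\frac{\sqrt{2}\,\delta e^{\delta\gamma}}{\pi}\int_{\beta/\sqrt{2}}^{\infty} e^{\sqrt{2}(x-\mu)t}\,K_0\!\left(\sqrt{2\left((x-\mu)^2+\delta^2\right)}\,\sqrt{\tfrac{\gamma^2}{2}+t^2}\right)dt . \]
   Context: The normal inverse Gaussian (NIG) distribution with parameters $\alpha>0$, $0\le|\beta|<\alpha$, $\mu\in\mathbb{R}$, $\delta>0$ has density $f(x;\alpha,\beta,\mu,\delta)=\frac{\alpha\delta}{\pi}\frac{K_1\left(\alpha\sqrt{\delta^2+(x-\mu)^2}\right)}{\sqrt{\delta^2+(x-\mu)^2}}e^{\delta\gamma+\beta(x-\mu)}$, $x\in\mathbb{R}$, where $\gamma=\sqrt{\alpha^2-\beta^2}$, and its cumulative distribution function is $F(x;\alpha,\beta,\mu,\delta)=\int_{-\infty}^x f(t;\alpha,\beta,\mu,\delta)\,dt$. Here $K_\nu$ denotes the modified Bessel function of the second kind of order $\nu$. *)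

theory Defs
  imports "HOL-Analysis.Analysis"
begin

definition besselK :: "real \<Rightarrow> real \<Rightarrow> real" where
  "besselK \<nu> z = (LBINT t:{0..}. exp (- z * cosh t) * cosh (\<nu> * t))"

definition nig_gamma :: "real \<Rightarrow> real \<Rightarrow> real" where
  "nig_gamma \<alpha> \<beta> = sqrt (\<alpha>\<^sup>2 - \<beta>\<^sup>2)"

definition nig_density :: "real \<Rightarrow> real \<Rightarrow> real \<Rightarrow> real \<Rightarrow> real \<Rightarrow> real" where
  "nig_density \<alpha> \<beta> \<mu> \<delta> x =
     \<alpha> * \<delta> / pi * besselK 1 (\<alpha> * sqrt (\<delta>\<^sup>2 + (x - \<mu>)\<^sup>2)) / sqrt (\<delta>\<^sup>2 + (x - \<mu>)\<^sup>2)
     * exp (\<delta> * nig_gamma \<alpha> \<beta> + \<beta> * (x - \<mu>))"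

definition nig_cdf :: "real \<Rightarrow> real \<Rightarrow> real \<Rightarrow> real \<Rightarrow> real \<Rightarrow> real" where
  "nig_cdf \<alpha> \<beta> \<mu> \<delta> x = (LBINT t:{..x}. nig_density \<alpha> \<beta> \<mu> \<delta> t)"

end

theory Submission
  imports Defs "HOL-Probability.Probability"
begin


lemma ennreal_ind: "ennreal (a * indicator S x) = ennreal a * indicator S x"
  by (auto split: split_indicator)

lemma log_subst:
  fixes F :: "real \<Rightarrow> real"
  assumes [measurable]: "F \<in> borel_measurable borel"
  shows "(\<integral>\<^sup>+ u. ennreal (F (exp u) * exp u) \<partial>lborel) = (\<integral>\<^sup>+ q. ennreal (F q) * indicator {0<..} q \<partial>lborel)"
proof (rule LIMSEQ_unique)
  let ?X = "\<lambda>n::nat. \<integral>\<^sup>+ u. ennreal (F (exp u) * exp u) * indicator {- real n..real n} u \<partial>lborel"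
  show "?X \<longlonglongrightarrow> (\<integral>\<^sup>+ u. ennreal (F (exp u) * exp u) \<partial>lborel)"
  proof (intro nn_integral_LIMSEQ)
    show "incseq (\<lambda>n u. ennreal (F (exp u) * exp u) * indicator {- real n..real n} u)"
      by (auto simp: incseq_def le_fun_def split: split_indicator intro!: mult_left_mono)
    fix u :: real
    show "(\<lambda>n. ennreal (F (exp u) * exp u) * indicator {- real n..real n} u) \<longlonglongrightarrow> ennreal (F (exp u) * exp u)"
    proof (rule tendsto_eventually)
      obtain N :: nat where "\<bar>u\<bar> \<le> real N" using real_arch_simple by blast
      then show "\<forall>\<^sub>F n in sequentially. ennreal (F (exp u) * exp u) * indicator {- real n..real n} u = ennreal (F (exp u) * exp u)"
        unfolding eventually_sequentially
        by (intro exI[of _ N]) (auto simp: indicator_def)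
    qed
  qed simp
  have eq: "?X n = (\<integral>\<^sup>+ q. ennreal (F q) * indicator {exp (- real n)..exp (real n)} q \<partial>lborel)" for n
  proof -
    have "(\<integral>\<^sup>+ q. ennreal (F q * indicator {exp (- real n)..exp (real n)} q) \<partial>lborel) =
          (\<integral>\<^sup>+ u. ennreal (F (exp u) * exp u * indicator {- real n..real n} u) \<partial>lborel)"
      by (rule nn_integral_substitution[where g=exp and g'=exp])
         (auto intro!: continuous_intros DERIV_exp simp: set_borel_measurable_def)
    then show ?thesis
      by (simp only: ennreal_ind)
  qed
  show "?X \<longlonglongrightarrow> (\<integral>\<^sup>+ q. ennreal (F q) * indicator {0<..} q \<partial>lborel)"
    unfolding eq
  proof (intro nn_integral_LIMSEQ)
    show "incseq (\<lambda>n q. ennreal (F q) * indicator {exp (- real n)..exp (real n)} q)"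
    proof (intro incseq_SucI le_funI)
      fix n q
      have "{exp (- real n)..exp (real n)} \<subseteq> {exp (- real (Suc n))..exp (real (Suc n))}" by auto
      then have "(indicator {exp (- real n)..exp (real n)} q :: ennreal) \<le> indicator {exp (- real (Suc n))..exp (real (Suc n))} q"
        by (intro indicator_leI) blast
      then show "ennreal (F q) * indicator {exp (- real n)..exp (real n)} q \<le> ennreal (F q) * indicator {exp (- real (Suc n))..exp (real (Suc n))} q"
        by (rule mult_left_mono) simp
    qed
    fix q :: real
    show "(\<lambda>n. ennreal (F q) * indicator {exp (- real n)..exp (real n)} q) \<longlonglongrightarrow> ennreal (F q) * indicator {0<..} q"
    proof (cases "q > 0")
      case True
      obtain N :: nat where "\<bar>ln q\<bar> \<le> real N" using real_arch_simple by blast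
      have "\<forall>n\<ge>N. q \<in> {exp (- real n)..exp (real n)}"
      proof (intro allI impI)
        fix n assume "n \<ge> N"
        then have "\<bar>ln q\<bar> \<le> real n" using \<open>\<bar>ln q\<bar> \<le> real N\<close> by linarith
        then have "exp (- real n) \<le> exp (ln q)" "exp (ln q) \<le> exp (real n)" by simp_all
        then show "q \<in> {exp (- real n)..exp (real n)}" using True by simp
      qed
      then show ?thesis using True
        by (intro tendsto_eventually) (auto simp: eventually_sequentially indicator_def)
    next
      case False
      have "q \<notin> {exp (- real n)..exp (real n)}" for n
      proof
        assume "q \<in> {exp (- real n)..exp (real n)}"
        then have "exp (- real n) \<le> q" by simp
        moreover have "0 < exp (- real n)" by simp
        ultimately show False using False by linarith
      qed
      then show ?thesis using False by simp
    qed
  qed simp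
qed



lemma borel_measurable_cosh[measurable (raw)]:
  fixes f :: "'a \<Rightarrow> real"
  assumes "f \<in> borel_measurable M"
  shows "(\<lambda>x. cosh (f x)) \<in> borel_measurable M"
  using continuous_on_cosh[OF continuous_on_id] assms
  by (intro measurable_compose[OF assms] borel_measurable_continuous_onI) auto

lemma nn_even:
  fixes h :: "real \<Rightarrow> real"
  assumes [measurable]: "h \<in> borel_measurable borel" and ev: "\<And>u. h (- u) = h u"
  shows "(\<integral>\<^sup>+ u. ennreal (h u) \<partial>lborel) = 2 * (\<integral>\<^sup>+ u. ennreal (h u) * indicator {0..} u \<partial>lborel)"
proof -
  have "(\<integral>\<^sup>+ u. ennreal (h u) \<partial>lborel) =
        (\<integral>\<^sup>+ u. ennreal (h u) * indicator {0..} u + ennreal (h u) * indicator {..<0} u \<partial>lborel)"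
    by (intro nn_integral_cong) (auto split: split_indicator)
  also have "\<dots> = (\<integral>\<^sup>+ u. ennreal (h u) * indicator {0..} u \<partial>lborel) + (\<integral>\<^sup>+ u. ennreal (h u) * indicator {..<0} u \<partial>lborel)"
    by (intro nn_integral_add) auto
  also have "(\<integral>\<^sup>+ u. ennreal (h u) * indicator {..<0} u \<partial>lborel) =
             (\<integral>\<^sup>+ u. ennreal (h (0 + (-1) * u)) * indicator {..<0} (0 + (-1) * u) \<partial>lborel)"
    by (subst nn_integral_real_affine[where c="-1" and t=0]) auto
  also have "\<dots> = (\<integral>\<^sup>+ u. ennreal (h u) * indicator {0..} u \<partial>lborel)"
  proof (rule nn_integral_cong_AE)
    show "AE u in lborel. ennreal (h (0 + (-1) * u)) * indicator {..<0} (0 + (-1) * u) = ennreal (h u) * indicator {0..} u"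
      using AE_lborel_singleton[of 0] by eventually_elim (auto simp: ev split: split_indicator)
  qed
  finally show ?thesis by (simp add: mult_2)
qed

lemma nn_reflect:
  fixes h :: "real \<Rightarrow> real"
  assumes [measurable]: "h \<in> borel_measurable borel"
  shows "(\<integral>\<^sup>+ u. ennreal (h (- u)) \<partial>lborel) = (\<integral>\<^sup>+ u. ennreal (h u) \<partial>lborel)"
  by (subst nn_integral_real_affine[where c="-1" and t=0, of "\<lambda>u. ennreal (h u)"]) auto

lemma besselK_nn:
  "besselK \<nu> z = enn2real (\<integral>\<^sup>+ u. ennreal (exp (- z * cosh u) * cosh (\<nu> * u)) * indicator {0..} u \<partial>lborel)"
proof -
  have "besselK \<nu> z = (\<integral> u. indicator {0..} u * (exp (- z * cosh u) * cosh (\<nu> * u)) \<partial>lborel)"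
    unfolding besselK_def set_lebesgue_integral_def by simp
  also have "\<dots> = enn2real (\<integral>\<^sup>+ u. ennreal (indicator {0..} u * (exp (- z * cosh u) * cosh (\<nu> * u))) \<partial>lborel)"
    by (rule integral_eq_nn_integral) (auto intro!: mult_nonneg_nonneg)
  also have "\<dots> = enn2real (\<integral>\<^sup>+ u. ennreal (exp (- z * cosh u) * cosh (\<nu> * u)) * indicator {0..} u \<partial>lborel)"
    by (intro arg_cong[where f=enn2real] nn_integral_cong) (auto split: split_indicator)
  finally show ?thesis .
qed

lemma besselK_measurable[measurable]: "(\<lambda>z. besselK \<nu> z) \<in> borel_measurable borel"
  unfolding besselK_nn by measurable

lemma besselK_nonneg: "besselK \<nu> z \<ge> 0"
  unfolding besselK_nn by simp



lemma exp_int_fin: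
  assumes "a > 0"
  shows "(\<integral>\<^sup>+ p. ennreal (exp (- a * p)) * indicator {0..} p \<partial>lborel) = ennreal (1 / a)"
proof -
  have "(\<integral>\<^sup>+ p. ennreal (exp (- a * p)) * indicator {0..} p \<partial>lborel) =
        ennreal (1/a) * (\<integral>\<^sup>+ p. ennreal (exp (- a * (0 + (1/a) * p))) * indicator {0..} (0 + (1/a) * p) \<partial>lborel)"
    using assms by (subst nn_integral_real_affine[where c="1/a" and t=0]) auto
  also have "(\<integral>\<^sup>+ p. ennreal (exp (- a * (0 + (1/a) * p))) * indicator {0..} (0 + (1/a) * p) \<partial>lborel) =
        (\<integral>\<^sup>+ p. ennreal (p ^ 0 * exp (- p)) * indicator {0..} p \<partial>lborel)"
    using assms by (intro nn_integral_cong) (auto split: split_indicator simp: zero_le_divide_iff zero_le_mult_iff)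
  also have "\<dots> = 1"
    using nn_intergal_power_times_exp_Ici[of 0] by simp
  finally show ?thesis by simp
qed

lemma cosh_exp_form: "exp (- z * ((q + 1 / q) / 2)) = exp (- z * cosh u)" if "q = exp u" for q u z :: real
  using that by (simp add: cosh_def exp_minus field_simps)

lemma cosh_alt: "cosh (u::real) = (exp u + 1 / exp u) / 2"
  by (simp add: cosh_field_def exp_minus inverse_eq_divide)

lemma scale_ab:
  fixes a b p :: real
  assumes "a > 0" "b > 0" "p > 0"
  shows "2 * sqrt (a * b) * (sqrt (a / b) * p + 1 / (sqrt (a / b) * p)) / 2 = a * p + b / p"
proof -
  have "sqrt (a * b) * sqrt (a / b) = a"
    using assms by (simp add: real_sqrt_mult[symmetric])
  moreover have "sqrt (a * b) / sqrt (a / b) = b"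
    using assms by (simp add: real_sqrt_divide real_sqrt_mult field_simps)
  ultimately show ?thesis using assms
    by (simp add: field_simps)
qed

lemma K1_full:
  assumes "z > 0"
  shows "2 * (\<integral>\<^sup>+ u. ennreal (exp (- z * cosh u) * cosh (1 * u)) * indicator {0..} u \<partial>lborel) =
         (\<integral>\<^sup>+ q. ennreal (exp (- z * ((q + 1 / q) / 2))) * indicator {0<..} q \<partial>lborel)"
proof -
  let ?e = "\<lambda>u. exp (- z * cosh u)"
  have "2 * (\<integral>\<^sup>+ u. ennreal (exp (- z * cosh u) * cosh (1 * u)) * indicator {0..} u \<partial>lborel) =
        (\<integral>\<^sup>+ u. ennreal (?e u * cosh u) \<partial>lborel)"
    by (subst nn_even[of "\<lambda>u. ?e u * cosh u"]) auto
  also have "\<dots> = (\<integral>\<^sup>+ u. ennreal (1/2) * ennreal (?e u * exp u) + ennreal (1/2) * ennreal (?e (- u) * exp (- u)) \<partial>lborel)"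
  proof (intro nn_integral_cong)
    fix u :: real
    have r: "?e u * cosh u = (1/2)*(?e u * exp u) + (1/2)*(?e (- u) * exp (- u))"
      by (simp add: cosh_def field_simps)
    show "ennreal (?e u * cosh u) = ennreal (1/2) * ennreal (?e u * exp u) + ennreal (1/2) * ennreal (?e (- u) * exp (- u))"
      unfolding r by (subst ennreal_plus, simp, simp, subst (1 2) ennreal_mult, simp_all)
  qed
  also have "\<dots> = ennreal (1/2) * (\<integral>\<^sup>+ u. ennreal (?e u * exp u) \<partial>lborel) + ennreal (1/2) * (\<integral>\<^sup>+ u. ennreal (?e (- u) * exp (- u)) \<partial>lborel)"
    by (subst nn_integral_add) (auto simp: nn_integral_cmult)
  also have "(\<integral>\<^sup>+ u. ennreal (?e (- u) * exp (- u)) \<partial>lborel) = (\<integral>\<^sup>+ u. ennreal (?e u * exp u) \<partial>lborel)"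
    by (rule nn_reflect[of "\<lambda>u. ?e u * exp u"]) auto
  also have "ennreal (1/2) * (\<integral>\<^sup>+ u. ennreal (?e u * exp u) \<partial>lborel) + ennreal (1/2) * (\<integral>\<^sup>+ u. ennreal (?e u * exp u) \<partial>lborel)
        = (\<integral>\<^sup>+ u. ennreal (?e u * exp u) \<partial>lborel)"
  proof -
    have "ennreal (1/2) + ennreal (1/2) = ennreal (1/2 + 1/2)" by (rule ennreal_plus[symmetric]) auto
    then have h: "ennreal (1/2) + ennreal (1/2) = 1" by simp
    show ?thesis by (simp only: distrib_right[symmetric] h mult_1)
  qed
  also have "\<dots> = (\<integral>\<^sup>+ u. ennreal (exp (- z * ((exp u + 1 / exp u) / 2)) * exp u) \<partial>lborel)"
    by (intro nn_integral_cong) (simp add: cosh_alt)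
  also have "\<dots> = (\<integral>\<^sup>+ q. ennreal (exp (- z * ((q + 1 / q) / 2))) * indicator {0<..} q \<partial>lborel)"
    by (rule log_subst[of "\<lambda>q. exp (- z * ((q + 1 / q) / 2))"]) auto
  finally show ?thesis .
qed

lemma K0_full:
  assumes "z > 0"
  shows "2 * (\<integral>\<^sup>+ u. ennreal (exp (- z * cosh u) * cosh (0 * u)) * indicator {0..} u \<partial>lborel) =
         (\<integral>\<^sup>+ q. ennreal (exp (- z * ((q + 1 / q) / 2)) / q) * indicator {0<..} q \<partial>lborel)"
proof -
  have "2 * (\<integral>\<^sup>+ u. ennreal (exp (- z * cosh u) * cosh (0 * u)) * indicator {0..} u \<partial>lborel) =
        (\<integral>\<^sup>+ u. ennreal (exp (- z * cosh u)) \<partial>lborel)"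
    by (subst nn_even[of "\<lambda>u. exp (- z * cosh u)"]) auto
  also have "\<dots> = (\<integral>\<^sup>+ u. ennreal (exp (- z * ((exp u + 1 / exp u) / 2)) / exp u * exp u) \<partial>lborel)"
    by (intro nn_integral_cong) (simp add: cosh_alt)
  also have "\<dots> = (\<integral>\<^sup>+ q. ennreal (exp (- z * ((q + 1 / q) / 2)) / q) * indicator {0<..} q \<partial>lborel)"
    by (rule log_subst[of "\<lambda>q. exp (- z * ((q + 1 / q) / 2)) / q"]) auto
  finally show ?thesis .
qed

lemma scale_ab':
  fixes a b p :: real
  assumes "a > 0" "b > 0" "p > 0"
  shows "- (2 * sqrt (a * b)) * ((sqrt (a / b) * p + 1 / (sqrt (a / b) * p)) / 2) = - (a * p + b / p)"
  using scale_ab[OF assms] by (simp add: field_simps)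

lemma Q_scale:
  fixes a b :: real and k :: nat
  assumes "a > 0" "b > 0"
  shows "(\<integral>\<^sup>+ q. ennreal (exp (- (2 * sqrt (a * b)) * ((q + 1 / q) / 2)) / q ^ k) * indicator {0<..} q \<partial>lborel) =
         ennreal (sqrt (a / b) / sqrt (a / b) ^ k) * (\<integral>\<^sup>+ p. ennreal (exp (- (a * p + b / p)) / p ^ k) * indicator {0<..} p \<partial>lborel)"
proof -
  define c where "c = sqrt (a / b)"
  have c: "c > 0" using assms by (simp add: c_def)
  have "(\<integral>\<^sup>+ q. ennreal (exp (- (2 * sqrt (a * b)) * ((q + 1 / q) / 2)) / q ^ k) * indicator {0<..} q \<partial>lborel) =
        ennreal c * (\<integral>\<^sup>+ p. ennreal (exp (- (2 * sqrt (a * b)) * (((0 + c * p) + 1 / (0 + c * p)) / 2)) / (0 + c * p) ^ k) * indicator {0<..} (0 + c * p) \<partial>lborel)"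
    using c by (subst nn_integral_real_affine[where c=c and t=0]) auto
  also have "(\<integral>\<^sup>+ p. ennreal (exp (- (2 * sqrt (a * b)) * (((0 + c * p) + 1 / (0 + c * p)) / 2)) / (0 + c * p) ^ k) * indicator {0<..} (0 + c * p) \<partial>lborel)
     = (\<integral>\<^sup>+ p. ennreal (1 / c ^ k) * (ennreal (exp (- (a * p + b / p)) / p ^ k) * indicator {0<..} p) \<partial>lborel)"
  proof (intro nn_integral_cong)
    fix p :: real
    show "ennreal (exp (- (2 * sqrt (a * b)) * (((0 + c * p) + 1 / (0 + c * p)) / 2)) / (0 + c * p) ^ k) * indicator {0<..} (0 + c * p)
       = ennreal (1 / c ^ k) * (ennreal (exp (- (a * p + b / p)) / p ^ k) * indicator {0<..} p)"
    proof (cases "p > 0")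
      case True
      have "exp (- (2 * sqrt (a * b)) * (((0 + c * p) + 1 / (0 + c * p)) / 2)) / (0 + c * p) ^ k
          = (1 / c ^ k) * (exp (- (a * p + b / p)) / p ^ k)"
        using scale_ab'[OF assms True] by (simp add: c_def power_mult_distrib)
      note eq = this
      have i1: "indicator {0<..} (0 + c * p) = (1::ennreal)" "indicator {0<..} p = (1::ennreal)"
        using True c by auto
      have e: "ennreal (exp (- (2 * sqrt (a * b)) * (((0 + c * p) + 1 / (0 + c * p)) / 2)) / (0 + c * p) ^ k)
           = ennreal (1 / c ^ k) * ennreal (exp (- (a * p + b / p)) / p ^ k)"
        by (subst eq) (rule ennreal_mult, use c True in simp_all)
      show ?thesis by (simp only: i1 e mult_1_right)
    next
      case False
      then show ?thesis using c by (simp add: zero_less_mult_iff)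
    qed
  qed
  also have "\<dots> = ennreal (1 / c ^ k) * (\<integral>\<^sup>+ p. ennreal (exp (- (a * p + b / p)) / p ^ k) * indicator {0<..} p \<partial>lborel)"
    by (rule nn_integral_cmult) measurable
  finally have fin: "(\<integral>\<^sup>+ q. ennreal (exp (- (2 * sqrt (a * b)) * ((q + 1 / q) / 2)) / q ^ k) * indicator {0<..} q \<partial>lborel) =
     ennreal c * (ennreal (1 / c ^ k) * (\<integral>\<^sup>+ p. ennreal (exp (- (a * p + b / p)) / p ^ k) * indicator {0<..} p \<partial>lborel))" .
  have cc: "ennreal c * ennreal (1 / c ^ k) = ennreal (sqrt (a / b) / sqrt (a / b) ^ k)"
    using c by (subst ennreal_mult[symmetric]) (auto simp: c_def)
  show ?thesis unfolding fin by (simp only: mult.assoc[symmetric] cc)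
qed

lemma P_finite:
  assumes "a > 0" "b > 0"
  shows "(\<integral>\<^sup>+ p. ennreal (exp (- (a * p + b / p))) * indicator {0<..} p \<partial>lborel) < \<infinity>"
proof -
  have "(\<integral>\<^sup>+ p. ennreal (exp (- (a * p + b / p))) * indicator {0<..} p \<partial>lborel) \<le>
        (\<integral>\<^sup>+ p. ennreal (exp (- a * p)) * indicator {0..} p \<partial>lborel)"
    using assms by (intro nn_integral_mono) (auto split: split_indicator)
  also have "\<dots> = ennreal (1 / a)" using assms(1) by (rule exp_int_fin)
  finally show ?thesis by (simp add: le_less_trans)
qed

lemma K1_fin:
  assumes "a > 0" "b > 0"
  shows "(\<integral>\<^sup>+ u. ennreal (exp (- (2 * sqrt (a * b)) * cosh u) * cosh (1 * u)) * indicator {0..} u \<partial>lborel) =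
     ennreal (sqrt (a / b) / 2) * (\<integral>\<^sup>+ p. ennreal (exp (- (a * p + b / p))) * indicator {0<..} p \<partial>lborel)"
proof -
  let ?X = "(\<integral>\<^sup>+ u. ennreal (exp (- (2 * sqrt (a * b)) * cosh u) * cosh (1 * u)) * indicator {0..} u \<partial>lborel)"
  let ?P = "(\<integral>\<^sup>+ p. ennreal (exp (- (a * p + b / p))) * indicator {0<..} p \<partial>lborel)"
  have z: "2 * sqrt (a * b) > 0" using assms by simp
  have "2 * ?X = ennreal (sqrt (a / b)) * ?P"
    using K1_full[OF z] Q_scale[OF assms, of 0] by simp
  have h2: "ennreal (1/2) * 2 = 1"
    by (metis ennreal_eq_1 ennreal_mult'' ennreal_numeral nonzero_eq_divide_eq zero_le_numeral zero_neq_numeral)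
  have "?X = ennreal (1/2) * (2 * ?X)" by (simp only: mult.assoc[symmetric] h2 mult_1)
  also have "\<dots> = ennreal (1/2) * (ennreal (sqrt (a / b)) * ?P)" using \<open>2 * ?X = _\<close> by simp
  also have "\<dots> = ennreal (1/2 * sqrt (a / b)) * ?P"
    using assms by (subst ennreal_mult) (auto simp: mult.assoc)
  finally show ?thesis by simp
qed

lemma besselK1_rep:
  assumes "a > 0" "b > 0"
  shows "ennreal (besselK 1 (2 * sqrt (a * b))) =
     ennreal (sqrt (a / b) / 2) * (\<integral>\<^sup>+ p. ennreal (exp (- (a * p + b / p))) * indicator {0<..} p \<partial>lborel)"
proof -
  have fin: "ennreal (sqrt (a / b) / 2) * (\<integral>\<^sup>+ p. ennreal (exp (- (a * p + b / p))) * indicator {0<..} p \<partial>lborel) < \<infinity>"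
    using P_finite[OF assms] by (simp add: ennreal_mult_less_top)
  show ?thesis
    unfolding besselK_nn K1_fin[OF assms] using fin by (simp add: ennreal_enn2real_if)
qed

lemma X0_le_X1:
  "(\<integral>\<^sup>+ u. ennreal (exp (- z * cosh u) * cosh (0 * u)) * indicator {0..} u \<partial>lborel) \<le>
   (\<integral>\<^sup>+ u. ennreal (exp (- z * cosh u) * cosh (1 * u)) * indicator {0..} u \<partial>lborel)"
  by (intro nn_integral_mono mult_right_mono ennreal_leI) (auto simp: cosh_real_ge_1)

lemma besselK0_rep:
  assumes "a > 0" "b > 0"
  shows "ennreal (besselK 0 (2 * sqrt (a * b))) =
     ennreal (1 / 2) * (\<integral>\<^sup>+ p. ennreal (exp (- (a * p + b / p)) / p) * indicator {0<..} p \<partial>lborel)"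
proof -
  let ?X = "(\<integral>\<^sup>+ u. ennreal (exp (- (2 * sqrt (a * b)) * cosh u) * cosh (0 * u)) * indicator {0..} u \<partial>lborel)"
  let ?P = "(\<integral>\<^sup>+ p. ennreal (exp (- (a * p + b / p)) / p) * indicator {0<..} p \<partial>lborel)"
  have z: "2 * sqrt (a * b) > 0" using assms by simp
  have c: "sqrt (a / b) > 0" using assms by simp
  have "2 * ?X = ennreal (sqrt (a / b) / sqrt (a / b) ^ 1) * ?P"
    using K0_full[OF z] Q_scale[OF assms, of 1] by simp
  then have "2 * ?X = ?P" using c assms by simp
  have h2: "ennreal (1/2) * 2 = 1"
    by (metis ennreal_eq_1 ennreal_mult'' ennreal_numeral nonzero_eq_divide_eq zero_le_numeral zero_neq_numeral)
  have "?X = ennreal (1/2) * (2 * ?X)" by (simp only: mult.assoc[symmetric] h2 mult_1)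
  also have "\<dots> = ennreal (1/2) * ?P" using \<open>2 * ?X = ?P\<close> by simp
  finally have X: "?X = ennreal (1/2) * ?P" .
  have "?X \<le> (\<integral>\<^sup>+ u. ennreal (exp (- (2 * sqrt (a * b)) * cosh u) * cosh (1 * u)) * indicator {0..} u \<partial>lborel)"
    by (rule X0_le_X1)
  also have "\<dots> = ennreal (sqrt (a / b) / 2) * (\<integral>\<^sup>+ p. ennreal (exp (- (a * p + b / p))) * indicator {0<..} p \<partial>lborel)"
    by (rule K1_fin[OF assms])
  also have "\<dots> < \<infinity>" using P_finite[OF assms] by (simp add: ennreal_mult_less_top)
  finally have "?X < \<infinity>" .
  then show ?thesis
    unfolding besselK_nn X[symmetric] by (simp add: ennreal_enn2real_if)
qed



lemma besselK_measurable_raw[measurable (raw)]: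
  fixes f :: "'a \<Rightarrow> real"
  assumes "f \<in> borel_measurable M"
  shows "(\<lambda>x. besselK \<nu> (f x)) \<in> borel_measurable M"
  by (rule measurable_compose[OF assms besselK_measurable])

lemma inner_L:
  fixes p m x :: real
  shows "(\<integral>\<^sup>+ t. ennreal (exp (- p * (t - m)\<^sup>2)) * indicator {..x} t \<partial>lborel) =
         (\<integral>\<^sup>+ w. ennreal (exp (- p * w\<^sup>2)) * indicator {..x - m} w \<partial>lborel)"
  by (subst nn_integral_real_affine[where c=1 and t=m]) (auto intro!: nn_integral_cong split: split_indicator)

lemma inner_R:
  fixes p c y :: real
  shows "(\<integral>\<^sup>+ t. ennreal (exp (- p * (t - y)\<^sup>2)) * indicator {c..} t \<partial>lborel) =
         (\<integral>\<^sup>+ w. ennreal (exp (- p * w\<^sup>2)) * indicator {..y - c} w \<partial>lborel)"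
  by (subst nn_integral_real_affine[where c="-1" and t=y]) (auto intro!: nn_integral_cong split: split_indicator)

lemma inner_R_scale:
  fixes p y \<delta> g \<beta> :: real
  assumes p: "p > 0"
  shows "(\<integral>\<^sup>+ t. ennreal (exp (sqrt 2 * y * t - ((y\<^sup>2 + \<delta>\<^sup>2) * p + (g\<^sup>2 / 4 + t\<^sup>2 / 2) / p)) / p) * indicator {\<beta> / sqrt 2..} t \<partial>lborel) =
         ennreal (sqrt 2) * (\<integral>\<^sup>+ \<tau>. ennreal (exp (- (\<delta>\<^sup>2 * p + g\<^sup>2 / (4 * p)))) * (ennreal (exp (- p * (\<tau> - y)\<^sup>2)) * indicator {\<beta> / (2 * p)..} \<tau>) \<partial>lborel)"
proof -
  have c: "sqrt 2 * p \<noteq> 0" using p by simp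
  have "(\<integral>\<^sup>+ t. ennreal (exp (sqrt 2 * y * t - ((y\<^sup>2 + \<delta>\<^sup>2) * p + (g\<^sup>2 / 4 + t\<^sup>2 / 2) / p)) / p) * indicator {\<beta> / sqrt 2..} t \<partial>lborel) =
     ennreal \<bar>sqrt 2 * p\<bar> * (\<integral>\<^sup>+ \<tau>. ennreal (exp (sqrt 2 * y * (0 + sqrt 2 * p * \<tau>) - ((y\<^sup>2 + \<delta>\<^sup>2) * p + (g\<^sup>2 / 4 + (0 + sqrt 2 * p * \<tau>)\<^sup>2 / 2) / p)) / p) * indicator {\<beta> / sqrt 2..} (0 + sqrt 2 * p * \<tau>) \<partial>lborel)"
    by (rule nn_integral_real_affine[OF _ c]) measurable
  also have "\<dots> = (\<integral>\<^sup>+ \<tau>. ennreal (sqrt 2) * (ennreal (exp (- (\<delta>\<^sup>2 * p + g\<^sup>2 / (4 * p)))) * (ennreal (exp (- p * (\<tau> - y)\<^sup>2)) * indicator {\<beta> / (2 * p)..} \<tau>)) \<partial>lborel)"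
  proof (subst nn_integral_cmult[symmetric], measurable, intro nn_integral_cong)
    fix \<tau> :: real
    have iff: "\<beta> / sqrt 2 \<le> 0 + sqrt 2 * p * \<tau> \<longleftrightarrow> \<beta> / (2 * p) \<le> \<tau>"
    proof -
      have "\<beta> / sqrt 2 \<le> 0 + sqrt 2 * p * \<tau> \<longleftrightarrow> \<beta> \<le> sqrt 2 * (sqrt 2 * p * \<tau>)"
        by (simp add: pos_divide_le_eq mult.commute)
      also have "sqrt 2 * (sqrt 2 * p * \<tau>) = 2 * p * \<tau>" by (simp add: mult.assoc[symmetric])
      also have "\<beta> \<le> 2 * p * \<tau> \<longleftrightarrow> \<beta> / (2 * p) \<le> \<tau>" using p by (simp add: pos_divide_le_eq mult.commute)
      finally show ?thesis .
    qed
    then have ind: "indicator {\<beta> / sqrt 2..} (0 + sqrt 2 * p * \<tau>) = (indicator {\<beta> / (2 * p)..} \<tau> :: ennreal)"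
      by (simp add: indicator_def)
    have ex: "sqrt 2 * y * (0 + sqrt 2 * p * \<tau>) - ((y\<^sup>2 + \<delta>\<^sup>2) * p + (g\<^sup>2 / 4 + (0 + sqrt 2 * p * \<tau>)\<^sup>2 / 2) / p)
        = - (\<delta>\<^sup>2 * p + g\<^sup>2 / (4 * p)) + (- p * (\<tau> - y)\<^sup>2)"
    proof -
      have a1: "sqrt 2 * y * (0 + sqrt 2 * p * \<tau>) = (sqrt 2 * sqrt 2) * (y*p*\<tau>)" by (simp add: ac_simps)
      have a2: "(0 + sqrt 2 * p * \<tau>)\<^sup>2 = 2 * p\<^sup>2 * \<tau>\<^sup>2" by (simp add: power_mult_distrib)
      show ?thesis unfolding a1 a2 using p
        by (simp add: field_simps power2_eq_square)
    qed
    have r: "\<bar>sqrt 2 * p\<bar> * (exp (sqrt 2 * y * (0 + sqrt 2 * p * \<tau>) - ((y\<^sup>2 + \<delta>\<^sup>2) * p + (g\<^sup>2 / 4 + (0 + sqrt 2 * p * \<tau>)\<^sup>2 / 2) / p)) / p)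
        = sqrt 2 * (exp (- (\<delta>\<^sup>2 * p + g\<^sup>2 / (4 * p))) * exp (- p * (\<tau> - y)\<^sup>2))"
      unfolding ex exp_add[symmetric] using p by simp
    show "ennreal \<bar>sqrt 2 * p\<bar> * (ennreal (exp (sqrt 2 * y * (0 + sqrt 2 * p * \<tau>) - ((y\<^sup>2 + \<delta>\<^sup>2) * p + (g\<^sup>2 / 4 + (0 + sqrt 2 * p * \<tau>)\<^sup>2 / 2) / p)) / p) *
          indicator {\<beta> / sqrt 2..} (0 + sqrt 2 * p * \<tau>)) =
        ennreal (sqrt 2) * (ennreal (exp (- (\<delta>\<^sup>2 * p + g\<^sup>2 / (4 * p)))) * (ennreal (exp (- p * (\<tau> - y)\<^sup>2)) * indicator {\<beta> / (2 * p)..} \<tau>))"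
      unfolding ind mult.assoc[symmetric] ennreal_mult'[symmetric]
      apply (subst ennreal_mult[symmetric], simp, use p in simp)
      apply (subst ennreal_mult[symmetric], simp, simp)
      apply (subst ennreal_mult[symmetric], simp, simp)
      unfolding r by (simp add: mult.assoc)
  qed
  also have "\<dots> = ennreal (sqrt 2) * (\<integral>\<^sup>+ \<tau>. ennreal (exp (- (\<delta>\<^sup>2 * p + g\<^sup>2 / (4 * p)))) * (ennreal (exp (- p * (\<tau> - y)\<^sup>2)) * indicator {\<beta> / (2 * p)..} \<tau>) \<partial>lborel)"
    by (rule nn_integral_cmult) measurable
  finally show ?thesis .
qed



lemma meas_atMost_dep[measurable]:
  fixes f g :: "'a \<Rightarrow> real"
  assumes [measurable]: "f \<in> borel_measurable M" "g \<in> borel_measurable M"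
  shows "Measurable.pred M (\<lambda>z. g z \<in> {..f z})"
  unfolding atMost_iff by measurable

lemma meas_atLeast_dep[measurable]:
  fixes f g :: "'a \<Rightarrow> real"
  assumes [measurable]: "f \<in> borel_measurable M" "g \<in> borel_measurable M"
  shows "Measurable.pred M (\<lambda>z. g z \<in> {f z..})"
  unfolding atLeast_iff by measurable

lemma meas_ind_pos[measurable]: "(indicator {0<..} :: real \<Rightarrow> ennreal) \<in> borel_measurable lborel"
  by (simp add: borel_measurable_indicator)

lemma exp_split: "exp (a - p * z) = exp a * exp (- p * z)" for a p z :: real
  by (simp add: exp_add[symmetric])

lemma expo_L:
  fixes p t \<mu> \<alpha> \<beta> \<delta> g :: real
  assumes p: "p > 0" and ag: "\<alpha>\<^sup>2 = g\<^sup>2 + \<beta>\<^sup>2"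
  shows "\<beta> * (t - \<mu>) - ((\<delta>\<^sup>2 + (t - \<mu>)\<^sup>2) * p + \<alpha>\<^sup>2 / 4 / p) =
         - (\<delta>\<^sup>2 * p + g\<^sup>2 / (4 * p)) - p * (t - (\<mu> + \<beta> / (2 * p)))\<^sup>2"
  using p unfolding ag by (simp add: field_simps power2_eq_square)

lemma dens_rep:
  fixes \<alpha> \<beta> \<mu> \<delta> t :: real
  assumes "\<alpha> > 0" "\<bar>\<beta>\<bar> < \<alpha>" "\<delta> > 0"
  shows "ennreal (nig_density \<alpha> \<beta> \<mu> \<delta> t) =
    (\<integral>\<^sup>+ p. ennreal (\<delta> * exp (\<delta> * nig_gamma \<alpha> \<beta>) / pi *
        exp (- (\<delta>\<^sup>2 * p + (nig_gamma \<alpha> \<beta>)\<^sup>2 / (4 * p)) - p * (t - (\<mu> + \<beta> / (2 * p)))\<^sup>2)) * indicator {0<..} p \<partial>lborel)"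
proof -
  define g where "g = nig_gamma \<alpha> \<beta>"
  have "\<beta>\<^sup>2 < \<alpha>\<^sup>2" using assms by (simp add: abs_less_iff power2_eq_square) (metis abs_less_iff abs_mult_less abs_mult_self_eq)
  then have ag: "\<alpha>\<^sup>2 = g\<^sup>2 + \<beta>\<^sup>2" unfolding g_def nig_gamma_def by simp
  define a where "a = \<delta>\<^sup>2 + (t - \<mu>)\<^sup>2"
  define b where "b = \<alpha>\<^sup>2 / 4"
  have a: "a > 0" using assms by (simp add: a_def add_pos_nonneg)
  have b: "b > 0" using assms by (simp add: b_def)
  have z: "\<alpha> * sqrt a = 2 * sqrt (a * b)"
    using assms a by (simp add: b_def real_sqrt_mult real_sqrt_divide)
  have s4: "sqrt (4::real) = 2"
  proof -
    have "sqrt (4::real) = sqrt (2\<^sup>2)" by simp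
    then show ?thesis by simp
  qed
  have c: "sqrt (a / b) / 2 = sqrt a / \<alpha>"
    using assms a by (simp add: b_def real_sqrt_divide real_sqrt_mult s4)
  define C where "C = \<alpha> * \<delta> / pi / sqrt a * exp (\<delta> * g + \<beta> * (t - \<mu>))"
  have C: "C \<ge> 0" using assms a by (simp add: C_def)
  have "nig_density \<alpha> \<beta> \<mu> \<delta> t = C * besselK 1 (2 * sqrt (a * b))"
    unfolding nig_density_def C_def g_def[symmetric] a_def[symmetric] z by simp
  then have "ennreal (nig_density \<alpha> \<beta> \<mu> \<delta> t) = ennreal C * ennreal (besselK 1 (2 * sqrt (a * b)))"
    using C besselK_nonneg by (simp add: ennreal_mult)
  also have "\<dots> = ennreal C * (ennreal (sqrt a / \<alpha>) * (\<integral>\<^sup>+ p. ennreal (exp (- (a * p + b / p))) * indicator {0<..} p \<partial>lborel))"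
    unfolding besselK1_rep[OF a b] c ..
  also have "\<dots> = ennreal (\<delta> / pi * exp (\<delta> * g + \<beta> * (t - \<mu>))) * (\<integral>\<^sup>+ p. ennreal (exp (- (a * p + b / p))) * indicator {0<..} p \<partial>lborel)"
  proof -
    have "C * (sqrt a / \<alpha>) = \<delta> / pi * exp (\<delta> * g + \<beta> * (t - \<mu>))"
      using assms a by (simp add: C_def field_simps)
    then show ?thesis using C assms a
      by (simp add: mult.assoc[symmetric] ennreal_mult[symmetric])
  qed
  also have "\<dots> = (\<integral>\<^sup>+ p. ennreal (\<delta> / pi * exp (\<delta> * g + \<beta> * (t - \<mu>))) * (ennreal (exp (- (a * p + b / p))) * indicator {0<..} p) \<partial>lborel)"
    by (rule nn_integral_cmult[symmetric]) measurable
  also have "\<dots> = (\<integral>\<^sup>+ p. ennreal (\<delta> * exp (\<delta> * g) / pi *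
        exp (- (\<delta>\<^sup>2 * p + g\<^sup>2 / (4 * p)) - p * (t - (\<mu> + \<beta> / (2 * p)))\<^sup>2)) * indicator {0<..} p \<partial>lborel)"
  proof (intro nn_integral_cong)
    fix p :: real
    show "ennreal (\<delta> / pi * exp (\<delta> * g + \<beta> * (t - \<mu>))) * (ennreal (exp (- (a * p + b / p))) * indicator {0<..} p) =
      ennreal (\<delta> * exp (\<delta> * g) / pi * exp (- (\<delta>\<^sup>2 * p + g\<^sup>2 / (4 * p)) - p * (t - (\<mu> + \<beta> / (2 * p)))\<^sup>2)) * indicator {0<..} p"
    proof (cases "p > 0")
      case True
      have "\<delta> / pi * exp (\<delta> * g + \<beta> * (t - \<mu>)) * exp (- (a * p + b / p)) =
            \<delta> * exp (\<delta> * g) / pi * exp (\<beta> * (t - \<mu>) - ((\<delta>\<^sup>2 + (t - \<mu>)\<^sup>2) * p + \<alpha>\<^sup>2 / 4 / p))"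
        by (simp add: a_def b_def exp_add[symmetric] exp_diff field_simps)
      also have "\<dots> = \<delta> * exp (\<delta> * g) / pi * exp (- (\<delta>\<^sup>2 * p + g\<^sup>2 / (4 * p)) - p * (t - (\<mu> + \<beta> / (2 * p)))\<^sup>2)"
        unfolding expo_L[OF True ag] ..
      finally have r: "\<delta> / pi * exp (\<delta> * g + \<beta> * (t - \<mu>)) * exp (- (a * p + b / p)) =
            \<delta> * exp (\<delta> * g) / pi * exp (- (\<delta>\<^sup>2 * p + g\<^sup>2 / (4 * p)) - p * (t - (\<mu> + \<beta> / (2 * p)))\<^sup>2)" .
      have e1: "ennreal (\<delta> / pi * exp (\<delta> * g + \<beta> * (t - \<mu>))) * ennreal (exp (- (a * p + b / p))) =
          ennreal (\<delta> / pi * exp (\<delta> * g + \<beta> * (t - \<mu>)) * exp (- (a * p + b / p)))"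
        by (rule ennreal_mult[symmetric]) (use assms in auto)
      show ?thesis by (simp only: mult.assoc[symmetric] e1 r)
    next
      case False
      then show ?thesis by simp
    qed
  qed
  finally show ?thesis unfolding g_def .
qed

lemma LHS_part:
  fixes \<alpha> \<beta> \<mu> \<delta> x :: real
  assumes "\<alpha> > 0" "\<bar>\<beta>\<bar> < \<alpha>" "\<delta> > 0"
  shows "(\<integral>\<^sup>+ t. ennreal (nig_density \<alpha> \<beta> \<mu> \<delta> t) * indicator {..x} t \<partial>lborel) =
    ennreal (\<delta> * exp (\<delta> * nig_gamma \<alpha> \<beta>) / pi) *
    (\<integral>\<^sup>+ p. ennreal (exp (- (\<delta>\<^sup>2 * p + (nig_gamma \<alpha> \<beta>)\<^sup>2 / (4 * p)))) *
        (\<integral>\<^sup>+ w. ennreal (exp (- p * w\<^sup>2)) * indicator {..x - \<mu> - \<beta> / (2 * p)} w \<partial>lborel) * indicator {0<..} p \<partial>lborel)"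
proof -
  define g where "g = nig_gamma \<alpha> \<beta>"
  define K where "K = \<delta> * exp (\<delta> * g) / pi"
  have K: "K \<ge> 0" using assms by (simp add: K_def)
  have "(\<integral>\<^sup>+ t. ennreal (nig_density \<alpha> \<beta> \<mu> \<delta> t) * indicator {..x} t \<partial>lborel) =
        (\<integral>\<^sup>+ t. (\<integral>\<^sup>+ p. ennreal (K * exp (- (\<delta>\<^sup>2 * p + g\<^sup>2 / (4 * p)) - p * (t - (\<mu> + \<beta> / (2 * p)))\<^sup>2)) * indicator {0<..} p * indicator {..x} t \<partial>lborel) \<partial>lborel)"
  proof (intro nn_integral_cong)
    fix t :: real
    show "ennreal (nig_density \<alpha> \<beta> \<mu> \<delta> t) * indicator {..x} t =
      (\<integral>\<^sup>+ p. ennreal (K * exp (- (\<delta>\<^sup>2 * p + g\<^sup>2 / (4 * p)) - p * (t - (\<mu> + \<beta> / (2 * p)))\<^sup>2)) * indicator {0<..} p * indicator {..x} t \<partial>lborel)"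
      unfolding dens_rep[OF assms] K_def g_def
      by (rule nn_integral_multc[symmetric]) measurable
  qed
  also have "\<dots> = (\<integral>\<^sup>+ p. (\<integral>\<^sup>+ t. ennreal (K * exp (- (\<delta>\<^sup>2 * p + g\<^sup>2 / (4 * p)) - p * (t - (\<mu> + \<beta> / (2 * p)))\<^sup>2)) * indicator {0<..} p * indicator {..x} t \<partial>lborel) \<partial>lborel)"
    by (rule lborel_pair.Fubini') measurable
  also have "\<dots> = (\<integral>\<^sup>+ p. ennreal K * (ennreal (exp (- (\<delta>\<^sup>2 * p + g\<^sup>2 / (4 * p)))) *
        (\<integral>\<^sup>+ w. ennreal (exp (- p * w\<^sup>2)) * indicator {..x - \<mu> - \<beta> / (2 * p)} w \<partial>lborel) * indicator {0<..} p) \<partial>lborel)"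
  proof (intro nn_integral_cong)
    fix p :: real
    show "(\<integral>\<^sup>+ t. ennreal (K * exp (- (\<delta>\<^sup>2 * p + g\<^sup>2 / (4 * p)) - p * (t - (\<mu> + \<beta> / (2 * p)))\<^sup>2)) * indicator {0<..} p * indicator {..x} t \<partial>lborel) =
      ennreal K * (ennreal (exp (- (\<delta>\<^sup>2 * p + g\<^sup>2 / (4 * p)))) *
        (\<integral>\<^sup>+ w. ennreal (exp (- p * w\<^sup>2)) * indicator {..x - \<mu> - \<beta> / (2 * p)} w \<partial>lborel) * indicator {0<..} p)"
    proof (cases "p > 0")
      case True
      have "(\<integral>\<^sup>+ t. ennreal (K * exp (- (\<delta>\<^sup>2 * p + g\<^sup>2 / (4 * p)) - p * (t - (\<mu> + \<beta> / (2 * p)))\<^sup>2)) * indicator {0<..} p * indicator {..x} t \<partial>lborel) =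
        (\<integral>\<^sup>+ t. (ennreal K * ennreal (exp (- (\<delta>\<^sup>2 * p + g\<^sup>2 / (4 * p))))) * (ennreal (exp (- p * (t - (\<mu> + \<beta> / (2 * p)))\<^sup>2)) * indicator {..x} t) \<partial>lborel)"
      proof (intro nn_integral_cong)
        fix t :: real
        show "ennreal (K * exp (- (\<delta>\<^sup>2 * p + g\<^sup>2 / (4 * p)) - p * (t - (\<mu> + \<beta> / (2 * p)))\<^sup>2)) * indicator {0<..} p * indicator {..x} t =
          (ennreal K * ennreal (exp (- (\<delta>\<^sup>2 * p + g\<^sup>2 / (4 * p))))) * (ennreal (exp (- p * (t - (\<mu> + \<beta> / (2 * p)))\<^sup>2)) * indicator {..x} t)"
          unfolding exp_split using True K
          by (subst ennreal_mult, simp, simp, subst ennreal_mult, simp, simp) (simp add: mult.assoc)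
      qed
      also have "\<dots> = (ennreal K * ennreal (exp (- (\<delta>\<^sup>2 * p + g\<^sup>2 / (4 * p))))) *
          (\<integral>\<^sup>+ t. ennreal (exp (- p * (t - (\<mu> + \<beta> / (2 * p)))\<^sup>2)) * indicator {..x} t \<partial>lborel)"
        by (rule nn_integral_cmult) measurable
      also have "(\<integral>\<^sup>+ t. ennreal (exp (- p * (t - (\<mu> + \<beta> / (2 * p)))\<^sup>2)) * indicator {..x} t \<partial>lborel) =
          (\<integral>\<^sup>+ w. ennreal (exp (- p * w\<^sup>2)) * indicator {..x - \<mu> - \<beta> / (2 * p)} w \<partial>lborel)"
        unfolding inner_L by (simp add: algebra_simps)
      finally show ?thesis using True by (simp add: mult.assoc)
    next
      case False
      then show ?thesis by simp
    qed
  qed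
  also have "\<dots> = ennreal K * (\<integral>\<^sup>+ p. ennreal (exp (- (\<delta>\<^sup>2 * p + g\<^sup>2 / (4 * p)))) *
        (\<integral>\<^sup>+ w. ennreal (exp (- p * w\<^sup>2)) * indicator {..x - \<mu> - \<beta> / (2 * p)} w \<partial>lborel) * indicator {0<..} p \<partial>lborel)"
    by (rule nn_integral_cmult) measurable
  finally show ?thesis unfolding K_def g_def .
qed



lemma Z_form:
  fixes y \<delta> g t :: real
  shows "sqrt (2 * (y\<^sup>2 + \<delta>\<^sup>2)) * sqrt (g\<^sup>2 / 2 + t\<^sup>2) = 2 * sqrt ((y\<^sup>2 + \<delta>\<^sup>2) * (g\<^sup>2 / 4 + t\<^sup>2 / 2))"
proof -
  have s4: "sqrt (4::real) = 2"
  proof -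
    have "sqrt (4::real) = sqrt (2\<^sup>2)" by simp
    then show ?thesis by simp
  qed
  have "sqrt (2 * (y\<^sup>2 + \<delta>\<^sup>2)) * sqrt (g\<^sup>2 / 2 + t\<^sup>2) = sqrt (4 * ((y\<^sup>2 + \<delta>\<^sup>2) * (g\<^sup>2 / 4 + t\<^sup>2 / 2)))"
    by (simp add: real_sqrt_mult[symmetric] field_simps)
  also have "\<dots> = 2 * sqrt ((y\<^sup>2 + \<delta>\<^sup>2) * (g\<^sup>2 / 4 + t\<^sup>2 / 2))"
    by (simp add: real_sqrt_mult s4)
  finally show ?thesis .
qed

lemma RHS_part:
  fixes y \<beta> \<delta> g :: real
  assumes d: "\<delta> > 0" and g: "g > 0"
  shows "(\<integral>\<^sup>+ t. ennreal (exp (sqrt 2 * y * t) * besselK 0 (sqrt (2 * (y\<^sup>2 + \<delta>\<^sup>2)) * sqrt (g\<^sup>2 / 2 + t\<^sup>2))) * indicator {\<beta> / sqrt 2..} t \<partial>lborel) =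
    ennreal (sqrt 2 / 2) *
    (\<integral>\<^sup>+ p. ennreal (exp (- (\<delta>\<^sup>2 * p + g\<^sup>2 / (4 * p)))) *
        (\<integral>\<^sup>+ w. ennreal (exp (- p * w\<^sup>2)) * indicator {..y - \<beta> / (2 * p)} w \<partial>lborel) * indicator {0<..} p \<partial>lborel)"
proof -
  define R where "R = y\<^sup>2 + \<delta>\<^sup>2"
  have R: "R > 0" using d by (simp add: R_def add_nonneg_pos)
  have "(\<integral>\<^sup>+ t. ennreal (exp (sqrt 2 * y * t) * besselK 0 (sqrt (2 * (y\<^sup>2 + \<delta>\<^sup>2)) * sqrt (g\<^sup>2 / 2 + t\<^sup>2))) * indicator {\<beta> / sqrt 2..} t \<partial>lborel) =
     (\<integral>\<^sup>+ t. (\<integral>\<^sup>+ p. ennreal (1/2) * (ennreal (exp (sqrt 2 * y * t - (R * p + (g\<^sup>2 / 4 + t\<^sup>2 / 2) / p)) / p) * indicator {0<..} p) * indicator {\<beta> / sqrt 2..} t \<partial>lborel) \<partial>lborel)"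
  proof (intro nn_integral_cong)
    fix t :: real
    have b: "g\<^sup>2 / 4 + t\<^sup>2 / 2 > 0" using g by (simp add: add_pos_nonneg)
    have "ennreal (exp (sqrt 2 * y * t) * besselK 0 (sqrt (2 * (y\<^sup>2 + \<delta>\<^sup>2)) * sqrt (g\<^sup>2 / 2 + t\<^sup>2))) =
          ennreal (exp (sqrt 2 * y * t)) * ennreal (besselK 0 (2 * sqrt (R * (g\<^sup>2 / 4 + t\<^sup>2 / 2))))"
      unfolding Z_form R_def by (rule ennreal_mult) (simp_all add: besselK_nonneg)
    also have "\<dots> = ennreal (exp (sqrt 2 * y * t)) * (ennreal (1 / 2) * (\<integral>\<^sup>+ p. ennreal (exp (- (R * p + (g\<^sup>2 / 4 + t\<^sup>2 / 2) / p)) / p) * indicator {0<..} p \<partial>lborel))"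
      unfolding besselK0_rep[OF R b] ..
    also have "\<dots> = ennreal (1 / 2) * (\<integral>\<^sup>+ p. ennreal (exp (sqrt 2 * y * t)) * (ennreal (exp (- (R * p + (g\<^sup>2 / 4 + t\<^sup>2 / 2) / p)) / p) * indicator {0<..} p) \<partial>lborel)"
      by (subst nn_integral_cmult) (measurable, simp add: ac_simps)
    also have "\<dots> = ennreal (1 / 2) * (\<integral>\<^sup>+ p. ennreal (exp (sqrt 2 * y * t - (R * p + (g\<^sup>2 / 4 + t\<^sup>2 / 2) / p)) / p) * indicator {0<..} p \<partial>lborel)"
    proof (rule arg_cong[where f="\<lambda>X. ennreal (1 / 2) * X"], rule nn_integral_cong)
      fix p :: real
      show "ennreal (exp (sqrt 2 * y * t)) * (ennreal (exp (- (R * p + (g\<^sup>2 / 4 + t\<^sup>2 / 2) / p)) / p) * indicator {0<..} p) =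
            ennreal (exp (sqrt 2 * y * t - (R * p + (g\<^sup>2 / 4 + t\<^sup>2 / 2) / p)) / p) * indicator {0<..} p"
      proof (cases "p > 0")
        case True
        have eq: "exp (sqrt 2 * y * t - (R * p + (g\<^sup>2 / 4 + t\<^sup>2 / 2) / p)) / p = exp (sqrt 2 * y * t) * (exp (- (R * p + (g\<^sup>2 / 4 + t\<^sup>2 / 2) / p)) / p)"
          by (simp add: exp_add[symmetric])
        show ?thesis unfolding eq using True
          by (subst ennreal_mult) (auto simp: mult.assoc)
      next
        case False
        then show ?thesis by simp
      qed
    qed
    also have "\<dots> = (\<integral>\<^sup>+ p. ennreal (1/2) * (ennreal (exp (sqrt 2 * y * t - (R * p + (g\<^sup>2 / 4 + t\<^sup>2 / 2) / p)) / p) * indicator {0<..} p) \<partial>lborel)"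
      by (rule nn_integral_cmult[symmetric]) measurable
    finally show "ennreal (exp (sqrt 2 * y * t) * besselK 0 (sqrt (2 * (y\<^sup>2 + \<delta>\<^sup>2)) * sqrt (g\<^sup>2 / 2 + t\<^sup>2))) * indicator {\<beta> / sqrt 2..} t =
     (\<integral>\<^sup>+ p. ennreal (1/2) * (ennreal (exp (sqrt 2 * y * t - (R * p + (g\<^sup>2 / 4 + t\<^sup>2 / 2) / p)) / p) * indicator {0<..} p) * indicator {\<beta> / sqrt 2..} t \<partial>lborel)"
      by (simp add: nn_integral_multc)
  qed
  also have "\<dots> = (\<integral>\<^sup>+ p. (\<integral>\<^sup>+ t. ennreal (1/2) * (ennreal (exp (sqrt 2 * y * t - (R * p + (g\<^sup>2 / 4 + t\<^sup>2 / 2) / p)) / p) * indicator {0<..} p) * indicator {\<beta> / sqrt 2..} t \<partial>lborel) \<partial>lborel)"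
    by (rule lborel_pair.Fubini') measurable
  also have "\<dots> = (\<integral>\<^sup>+ p. ennreal (sqrt 2 / 2) * (ennreal (exp (- (\<delta>\<^sup>2 * p + g\<^sup>2 / (4 * p)))) *
        (\<integral>\<^sup>+ w. ennreal (exp (- p * w\<^sup>2)) * indicator {..y - \<beta> / (2 * p)} w \<partial>lborel) * indicator {0<..} p) \<partial>lborel)"
  proof (intro nn_integral_cong)
    fix p :: real
    show "(\<integral>\<^sup>+ t. ennreal (1/2) * (ennreal (exp (sqrt 2 * y * t - (R * p + (g\<^sup>2 / 4 + t\<^sup>2 / 2) / p)) / p) * indicator {0<..} p) * indicator {\<beta> / sqrt 2..} t \<partial>lborel) =
      ennreal (sqrt 2 / 2) * (ennreal (exp (- (\<delta>\<^sup>2 * p + g\<^sup>2 / (4 * p)))) *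
        (\<integral>\<^sup>+ w. ennreal (exp (- p * w\<^sup>2)) * indicator {..y - \<beta> / (2 * p)} w \<partial>lborel) * indicator {0<..} p)"
    proof (cases "p > 0")
      case True
      have "(\<integral>\<^sup>+ t. ennreal (1/2) * (ennreal (exp (sqrt 2 * y * t - (R * p + (g\<^sup>2 / 4 + t\<^sup>2 / 2) / p)) / p) * indicator {0<..} p) * indicator {\<beta> / sqrt 2..} t \<partial>lborel) =
            (\<integral>\<^sup>+ t. ennreal (1/2) * (ennreal (exp (sqrt 2 * y * t - ((y\<^sup>2 + \<delta>\<^sup>2) * p + (g\<^sup>2 / 4 + t\<^sup>2 / 2) / p)) / p) * indicator {\<beta> / sqrt 2..} t) \<partial>lborel)"
        using True by (intro nn_integral_cong) (simp add: R_def mult.assoc)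
      also have "\<dots> = ennreal (1/2) * (\<integral>\<^sup>+ t. ennreal (exp (sqrt 2 * y * t - ((y\<^sup>2 + \<delta>\<^sup>2) * p + (g\<^sup>2 / 4 + t\<^sup>2 / 2) / p)) / p) * indicator {\<beta> / sqrt 2..} t \<partial>lborel)"
        by (rule nn_integral_cmult) measurable
      also have "\<dots> = ennreal (1/2) * (ennreal (sqrt 2) * (\<integral>\<^sup>+ \<tau>. ennreal (exp (- (\<delta>\<^sup>2 * p + g\<^sup>2 / (4 * p)))) * (ennreal (exp (- p * (\<tau> - y)\<^sup>2)) * indicator {\<beta> / (2 * p)..} \<tau>) \<partial>lborel))"
        unfolding inner_R_scale[OF True] ..
      also have "\<dots> = ennreal (1/2) * (ennreal (sqrt 2) * (ennreal (exp (- (\<delta>\<^sup>2 * p + g\<^sup>2 / (4 * p)))) * (\<integral>\<^sup>+ \<tau>. ennreal (exp (- p * (\<tau> - y)\<^sup>2)) * indicator {\<beta> / (2 * p)..} \<tau> \<partial>lborel)))"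
        apply (subst nn_integral_cmult)
        subgoal by measurable
        subgoal by (rule refl)
        done
      also have "(\<integral>\<^sup>+ \<tau>. ennreal (exp (- p * (\<tau> - y)\<^sup>2)) * indicator {\<beta> / (2 * p)..} \<tau> \<partial>lborel) =
          (\<integral>\<^sup>+ w. ennreal (exp (- p * w\<^sup>2)) * indicator {..y - \<beta> / (2 * p)} w \<partial>lborel)"
        by (rule inner_R)
      also have "ennreal (1/2) * (ennreal (sqrt 2) * (ennreal (exp (- (\<delta>\<^sup>2 * p + g\<^sup>2 / (4 * p)))) * (\<integral>\<^sup>+ w. ennreal (exp (- p * w\<^sup>2)) * indicator {..y - \<beta> / (2 * p)} w \<partial>lborel)))
         = ennreal (1/2 * sqrt 2) * (ennreal (exp (- (\<delta>\<^sup>2 * p + g\<^sup>2 / (4 * p)))) * (\<integral>\<^sup>+ w. ennreal (exp (- p * w\<^sup>2)) * indicator {..y - \<beta> / (2 * p)} w \<partial>lborel))"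
        by (subst ennreal_mult) (simp_all add: mult.assoc)
      finally show ?thesis using True by simp
    next
      case False
      then show ?thesis by simp
    qed
  qed
  also have "\<dots> = ennreal (sqrt 2 / 2) * (\<integral>\<^sup>+ p. ennreal (exp (- (\<delta>\<^sup>2 * p + g\<^sup>2 / (4 * p)))) *
        (\<integral>\<^sup>+ w. ennreal (exp (- p * w\<^sup>2)) * indicator {..y - \<beta> / (2 * p)} w \<partial>lborel) * indicator {0<..} p \<partial>lborel)"
    by (rule nn_integral_cmult) measurable
  finally show ?thesis .
qed



lemma set_lint_nn:
  fixes f :: "real \<Rightarrow> real"
  assumes [measurable]: "f \<in> borel_measurable borel" "A \<in> sets borel" and nn: "\<And>t. f t \<ge> 0"
  shows "(LBINT t:A. f t) = enn2real (\<integral>\<^sup>+ t. ennreal (f t) * indicator A t \<partial>lborel)"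
proof -
  have "(LBINT t:A. f t) = (\<integral> t. indicator A t * f t \<partial>lborel)"
    unfolding set_lebesgue_integral_def by simp
  also have "\<dots> = enn2real (\<integral>\<^sup>+ t. ennreal (indicator A t * f t) \<partial>lborel)"
    by (rule integral_eq_nn_integral) (auto simp: nn)
  also have "\<dots> = enn2real (\<integral>\<^sup>+ t. ennreal (f t) * indicator A t \<partial>lborel)"
    by (intro arg_cong[where f=enn2real] nn_integral_cong) (auto split: split_indicator)
  finally show ?thesis .
qed

theorem proposition1:
  fixes \<alpha> \<beta> \<mu> \<delta> x :: real
  assumes "\<alpha> > 0" and "\<bar>\<beta>\<bar> < \<alpha>" and "\<delta> > 0" and "x - \<mu> < 0"
  shows "nig_cdf \<alpha> \<beta> \<mu> \<delta> x =
    sqrt 2 * \<delta> * exp (\<delta> * nig_gamma \<alpha> \<beta>) / pi *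
    (LBINT t:{\<beta> / sqrt 2..}. exp (sqrt 2 * (x - \<mu>) * t) *
       besselK 0 (sqrt (2 * ((x - \<mu>)\<^sup>2 + \<delta>\<^sup>2)) * sqrt ((nig_gamma \<alpha> \<beta>)\<^sup>2 / 2 + t\<^sup>2)))"
proof -
  have "\<beta>\<^sup>2 < \<alpha>\<^sup>2" using assms(1,2)
    by (metis abs_le_square_iff abs_of_pos linorder_not_le)
  then have gpos: "nig_gamma \<alpha> \<beta> > 0" unfolding nig_gamma_def by simp
  define K where "K = \<delta> * exp (\<delta> * nig_gamma \<alpha> \<beta>) / pi"
  have K: "K \<ge> 0" using assms by (simp add: K_def)
  define Cm where "Cm = (\<integral>\<^sup>+ p. ennreal (exp (- (\<delta>\<^sup>2 * p + (nig_gamma \<alpha> \<beta>)\<^sup>2 / (4 * p)))) *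
        (\<integral>\<^sup>+ w. ennreal (exp (- p * w\<^sup>2)) * indicator {..x - \<mu> - \<beta> / (2 * p)} w \<partial>lborel) * indicator {0<..} p \<partial>lborel)"
  have dnn: "nig_density \<alpha> \<beta> \<mu> \<delta> t \<ge> 0" for t
    using assms besselK_nonneg by (simp add: nig_density_def)
  have dm: "(\<lambda>t. nig_density \<alpha> \<beta> \<mu> \<delta> t) \<in> borel_measurable borel"
    unfolding nig_density_def by measurable
  have L: "nig_cdf \<alpha> \<beta> \<mu> \<delta> x = K * enn2real Cm"
    unfolding nig_cdf_def set_lint_nn[OF dm _ dnn, of "{..x}", simplified] LHS_part[OF assms(1-3)]
    unfolding K_def[symmetric] Cm_def[symmetric] using K by (simp add: enn2real_mult)
  have R: "(LBINT t:{\<beta> / sqrt 2..}. exp (sqrt 2 * (x - \<mu>) * t) *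
       besselK 0 (sqrt (2 * ((x - \<mu>)\<^sup>2 + \<delta>\<^sup>2)) * sqrt ((nig_gamma \<alpha> \<beta>)\<^sup>2 / 2 + t\<^sup>2))) = sqrt 2 / 2 * enn2real Cm"
  proof -
    have "(LBINT t:{\<beta> / sqrt 2..}. exp (sqrt 2 * (x - \<mu>) * t) *
       besselK 0 (sqrt (2 * ((x - \<mu>)\<^sup>2 + \<delta>\<^sup>2)) * sqrt ((nig_gamma \<alpha> \<beta>)\<^sup>2 / 2 + t\<^sup>2))) =
       enn2real (\<integral>\<^sup>+ t. ennreal (exp (sqrt 2 * (x - \<mu>) * t) *
       besselK 0 (sqrt (2 * ((x - \<mu>)\<^sup>2 + \<delta>\<^sup>2)) * sqrt ((nig_gamma \<alpha> \<beta>)\<^sup>2 / 2 + t\<^sup>2))) * indicator {\<beta> / sqrt 2..} t \<partial>lborel)"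
      by (rule set_lint_nn) (auto simp: besselK_nonneg)
    also have "\<dots> = enn2real (ennreal (sqrt 2 / 2) * Cm)"
      unfolding RHS_part[OF assms(3) gpos] Cm_def by (simp add: algebra_simps)
    finally show ?thesis by (simp add: enn2real_mult)
  qed
  have ar: "s * d * e / pi * (s / 2 * c) = (s * s) / 2 * (d * e / pi * c)" for s d e c :: real
    by (simp add: field_simps)
  show ?thesis unfolding L R K_def ar by simp
qed


end
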